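(* Let $A$ be a general metric space and $M$ a left module on $A$. Then for every $x\in A$, $$M(x)\ \le\ \sup_{\epsilon>0}\ \inf\{A(x,y): y\in A,\ M(y)\le\epsilon\}.$$ If moreover $M$ is $\mathcal P_1$-flat, this is an equality for every $x$, i.e. $M=M^-(\mathcal F(M))$.
   Context: $[0,\infty]$ with $+$ ($x+\infty=\infty$), internal hom $[x,y]=\max(y-x,0)$ for finite $x,y$, $[x,\infty]=\infty$ for $x<\infty$, $[\infty,y]=0$; $\inf\emptyset=\infty$, $\sup\emptyset=0$. A general metric space $A$ is a set with $A(-,-):A\times A\to[0,\infty]$, $A(x,x)=0$, $A(x,z)\le A(x,y)+A(y,z)$. A left module is $M:A\to[0,\infty]$ with $M(x)\le M(y)+A(x,y)$; a right module is $N:A\to[0,\infty]$ with $N(y)\le A(x,y)+N(x)$. A left module $M$ is $\mathcal P_1$-flat iff $\inf_xM(x)=0$ and for every $v\in[0,\infty]$ and every right module $N$, $\inf_x(M(x)+[v,N(x)])=[v,\inf_x(M(x)+N(x))]$. $\mathcal F(M)$ is the set of subsets of $A$ containing some $\{y:M(y)\le\epsilon\}$, $\epsilon>0$, and for a filter $\mathcal F$, $M^-(\mathcal F)(x)=\sup_{f\in\mathcal F}\inf_{y\in f}A(x,y)$. *)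

theory Defs
  imports "HOL-Library.Extended_Nonnegative_Real"
begin

text \<open>The quantale [0,\<infinity>] is modelled by ennreal; Inf {} = \<infinity>, Sup {} = 0 hold there.\<close>

definition ihom :: "ennreal \<Rightarrow> ennreal \<Rightarrow> ennreal" where
  "ihom x y = (if x = \<infinity> then 0 else if y = \<infinity> then \<infinity> else y - x)"

definition gen_metric :: "('a \<Rightarrow> 'a \<Rightarrow> ennreal) \<Rightarrow> bool" where
  "gen_metric A \<longleftrightarrow> (\<forall>x. A x x = 0) \<and> (\<forall>x y z. A x z \<le> A x y + A y z)"

definition left_module :: "('a \<Rightarrow> 'a \<Rightarrow> ennreal) \<Rightarrow> ('a \<Rightarrow> ennreal) \<Rightarrow> bool" where
  "left_module A M \<longleftrightarrow> (\<forall>x y. M x \<le> M y + A x y)"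

definition right_module :: "('a \<Rightarrow> 'a \<Rightarrow> ennreal) \<Rightarrow> ('a \<Rightarrow> ennreal) \<Rightarrow> bool" where
  "right_module A N \<longleftrightarrow> (\<forall>x y. N y \<le> A x y + N x)"

definition P1_flat :: "('a \<Rightarrow> 'a \<Rightarrow> ennreal) \<Rightarrow> ('a \<Rightarrow> ennreal) \<Rightarrow> bool" where
  "P1_flat A M \<longleftrightarrow> (INF x. M x) = 0 \<and>
     (\<forall>v N. right_module A N \<longrightarrow>
        (INF x. M x + ihom v (N x)) = ihom v (INF x. M x + N x))"

definition filter_of :: "('a \<Rightarrow> ennreal) \<Rightarrow> 'a set set" where
  "filter_of M = {S. \<exists>\<epsilon>>0. {y. M y \<le> \<epsilon>} \<subseteq> S}"

definition Mminus :: "('a \<Rightarrow> 'a \<Rightarrow> ennreal) \<Rightarrow> 'a set set \<Rightarrow> 'a \<Rightarrow> ennreal" where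
  "Mminus A F x = (SUP f\<in>F. INF y\<in>f. A x y)"

end

theory Submission
  imports Defs
begin

theorem mainTheorem11:
  fixes A :: "'a \<Rightarrow> 'a \<Rightarrow> ennreal" and M :: "'a \<Rightarrow> ennreal"
  assumes "gen_metric A" and "left_module A M"
  shows "(\<forall>x. M x \<le> (SUP \<epsilon>\<in>{0<..}. INF y\<in>{y. M y \<le> \<epsilon>}. A x y))
       \<and> (P1_flat A M \<longrightarrow>
            (\<forall>x. M x = (SUP \<epsilon>\<in>{0<..}. INF y\<in>{y. M y \<le> \<epsilon>}. A x y))
            \<and> M = Mminus A (filter_of M))"
proof -
  define I where "I x e = (INF y\<in>{y. M y \<le> e}. A x y)" for x e
  define S where "S x = (SUP e\<in>{0<..}. I x e)" for x
  have lm: "M x \<le> M y + A x y" for x y using assms(2) unfolding left_module_def by blast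
  have gm: "A x x = 0" "A x z \<le> A x y + A y z" for x y z
    using assms(1) unfolding gen_metric_def by blast+
  have IS: "I x e \<le> S x" if "e > 0" for x e unfolding S_def using that by (auto intro: SUP_upper)
  have part1: "M x \<le> S x" for x
  proof (rule ennreal_le_epsilon)
    fix r :: real assume r: "0 < r"
    have "M x \<le> ennreal r + I x (ennreal r)"
      unfolding I_def
    proof -
      have "M x \<le> ennreal r + A x y" if "M y \<le> ennreal r" for y
      proof -
        have "M x \<le> M y + A x y" by (rule lm)
        also have "\<dots> \<le> ennreal r + A x y" using that by (intro add_mono) auto
        finally show ?thesis .
      qed
      hence "M x - ennreal r \<le> A x y" if "M y \<le> ennreal r" for y
        using that ennreal_minus_le_iff[of "M x" "ennreal r"] by simp
      hence "M x - ennreal r \<le> (INF y\<in>{y. M y \<le> ennreal r}. A x y)"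
        by (auto intro: INF_greatest)
      thus "M x \<le> ennreal r + (INF y\<in>{y. M y \<le> ennreal r}. A x y)"
        using ennreal_minus_le_iff[of "M x" "ennreal r"] by simp
    qed
    also have "\<dots> \<le> ennreal r + S x" using IS[of "ennreal r" x] r by (intro add_mono) auto
    finally show "M x \<le> S x + ennreal r" by (simp add: add.commute)
  qed
  have part3: "Mminus A (filter_of M) x = S x" for x
  proof (rule antisym)
    show "Mminus A (filter_of M) x \<le> S x"
      unfolding Mminus_def
    proof (rule SUP_least)
      fix f assume "f \<in> filter_of M"
      then obtain e where e: "e > 0" "{y. M y \<le> e} \<subseteq> f" unfolding filter_of_def by blast
      have "(INF y\<in>f. A x y) \<le> I x e" unfolding I_def using e(2) by (rule INF_superset_mono) auto
      also have "\<dots> \<le> S x" using IS e(1) by blast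
      finally show "(INF y\<in>f. A x y) \<le> S x" .
    qed
    show "S x \<le> Mminus A (filter_of M) x"
      unfolding S_def Mminus_def
    proof (rule SUP_least)
      fix e :: ennreal assume "e \<in> {0<..}"
      hence "{y. M y \<le> e} \<in> filter_of M" unfolding filter_of_def by auto
      thus "I x e \<le> (SUP f\<in>filter_of M. INF y\<in>f. A x y)" unfolding I_def by (rule SUP_upper)
    qed
  qed
  have part2: "S x \<le> M x" if fl: "P1_flat A M" for x
  proof -
    have rm: "right_module A (A x)" unfolding right_module_def
      by (metis gm(2) add.commute)
    have inf0: "(INF y. M y + A x y) = M x"
    proof (rule antisym)
      show "(INF y. M y + A x y) \<le> M x" using INF_lower[OF UNIV_I, of "\<lambda>y. M y + A x y" x] gm(1)[of x] by simp
      show "M x \<le> (INF y. M y + A x y)" by (rule INF_greatest) (rule lm)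
    qed
    show ?thesis unfolding S_def
    proof (rule SUP_least)
      fix e :: ennreal assume e: "e \<in> {0<..}"
      show "I x e \<le> M x"
      proof (rule ccontr)
        assume "\<not> I x e \<le> M x"
        hence lt: "M x < I x e" by simp
        then obtain t where t: "M x < t" "t < I x e" using dense by blast
        have tfin: "t \<noteq> \<infinity>" using t(2) by auto
        have "(INF y. M y + ihom t (A x y)) = ihom t (INF y. M y + A x y)"
          using fl rm unfolding P1_flat_def by blast
        also have "\<dots> = 0" using inf0 t(1) tfin unfolding ihom_def by (auto simp: diff_eq_0_iff_ennreal less_top)
        finally have z: "(INF y. M y + ihom t (A x y)) = 0" .
        define d where "d = min e (I x e - t)"
        have dpos: "0 < d" unfolding d_def using e t(2) tfin
          by (auto simp: diff_gr0_ennreal)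
        have "\<exists>y. M y + ihom t (A x y) < d"
          using INF_less_iff[of "\<lambda>y. M y + ihom t (A x y)" UNIV d] z dpos by auto
        then obtain y where y: "M y + ihom t (A x y) < d" by blast
        have "M y \<le> M y + ihom t (A x y)" by simp
        also have "\<dots> \<le> d" using y by simp
        also have "d \<le> e" unfolding d_def by simp
        finally have "M y \<le> e" .
        hence "I x e \<le> A x y" unfolding I_def by (auto intro: INF_lower)
        hence "I x e - t \<le> ihom t (A x y)" unfolding ihom_def using tfin
          by (auto intro: ennreal_minus_mono)
        hence "d \<le> M y + ihom t (A x y)" unfolding d_def
          by (metis add_increasing min.coboundedI2 zero_le)
        thus False using y by simp
      qed
    qed
  qed
  show ?thesis
    using part1 part2 part3 unfolding S_def[symmetric] I_def[symmetric]
    by (auto intro: antisym simp: fun_eq_iff)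
qed

end
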